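(* Let $N\ge3$ and $\alpha>-2$. There exists a constant $C_{N,\alpha}>0$ depending only on $N$ and $\alpha$ such that for every $\beta\le\beta_0$, $$u_\beta(r)\le-(4+\alpha)\ln r+C_{N,\alpha}\quad\text{for all }r>0.$$
   Context: Fix an integer $N\ge3$ and $\alpha>-2$. For $\beta\in\mathbb{R}$, $u_\beta$ denotes the radial function $u_\beta(x)=u_\beta(r)$, $r=|x|$, solving the initial value problem $\Delta^2u=|x|^\alpha e^u$ for $r\in[0,R_\beta)$, $u'(0)=u'''(0)=0$, $u(0)=0$, $\Delta u(0)=\beta$, where $\Delta u=u''+\frac{N-1}{r}u'$ is the radial Laplacian in $\mathbb{R}^N$ and $[0,R_\beta)$ is the maximal interval of existence. $u_\beta$ is called an entire solution if $R_\beta=\infty$. $\beta_0:=\sup\{\beta\in\mathbb{R}:R_\beta=\infty\}$; it is known that $\beta_0$ is a finite negative number and that $R_\beta=\infty$ if and only if $\beta\le\beta_0$. *)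

theory Defs
  imports "HOL-Analysis.Analysis"
begin

(* Radial solution of \<Delta>^2 u = |x|^\<alpha> e^u on [0,R) in R^N, written as the system
  u'' + (N-1)/r u' = v, v'' + (N-1)/r v' = r^\<alpha> e^u on (0,R), with the regular initial
  conditions u(0) = 0, u'(0+) = 0, \<Delta>u(0+) = \<beta>, and r^(N-1) (\<Delta>u)'(r) \<rightarrow> 0 as r \<rightarrow> 0+
  (the meaning of u'''(0)=0 for a regular radial solution; it is literal when \<alpha> \<ge> 0).
  Here u1 = u', v = \<Delta>u, v1 = (\<Delta>u)'. *)
definition radial_sol_on :: "nat \<Rightarrow> real \<Rightarrow> real \<Rightarrow> ereal \<Rightarrow> (real \<Rightarrow> real) \<Rightarrow> bool" where
  "radial_sol_on N \<alpha> \<beta> R u \<longleftrightarrow>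
     0 < R \<and> u 0 = 0 \<and> continuous_on {r. 0 \<le> r \<and> ereal r < R} u \<and>
     (\<exists>u1 v v1.
        (\<forall>r. 0 < r \<and> ereal r < R \<longrightarrow>
            (u has_real_derivative u1 r) (at r) \<and>
            (u1 has_real_derivative (v r - (real N - 1) / r * u1 r)) (at r) \<and>
            (v has_real_derivative v1 r) (at r) \<and>
            (v1 has_real_derivative (r powr \<alpha> * exp (u r) - (real N - 1) / r * v1 r)) (at r)) \<and>
        (u1 \<longlongrightarrow> 0) (at_right 0) \<and>
        (v \<longlongrightarrow> \<beta>) (at_right 0) \<and>
        ((\<lambda>r. r ^ (N - 1) * v1 r) \<longlongrightarrow> 0) (at_right 0))"

definition entire_sol :: "nat \<Rightarrow> real \<Rightarrow> real \<Rightarrow> (real \<Rightarrow> real) \<Rightarrow> bool" where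
  "entire_sol N \<alpha> \<beta> u \<longleftrightarrow> radial_sol_on N \<alpha> \<beta> \<infinity> u"

definition beta0 :: "nat \<Rightarrow> real \<Rightarrow> real" where
  "beta0 N \<alpha> = Sup {\<beta>. \<exists>u. entire_sol N \<alpha> \<beta> u}"

end

theory Submission
  imports Defs
begin

lemma lim_le:
  fixes f f' :: "real \<Rightarrow> real"
  assumes b: "0 < b" and d: "\<And>t. 0<t \<Longrightarrow> t \<le> b \<Longrightarrow> (f has_real_derivative f' t) (at t)"
    and n: "\<And>t. 0<t \<Longrightarrow> t \<le> b \<Longrightarrow> f' t \<ge> 0" and l: "(f \<longlongrightarrow> L) (at_right 0)"
  shows "L \<le> f b"
proof -
  have "eventually (\<lambda>t. t \<in> {0<..<b}) (at_right (0::real))"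
    using eventually_at_right_real[OF b] .
  then have "eventually (\<lambda>t. f t \<le> f b) (at_right 0)"
  proof (rule eventually_mono)
    fix t assume t: "t \<in> {0<..<b}"
    show "f t \<le> f b"
      by (rule deriv_nonneg_imp_mono[of t b f f']) (use t d n in auto)
  qed
  then show ?thesis
    by (rule tendsto_upperbound[OF l]) simp
qed

lemma compare:
  fixes f g f' g' :: "real \<Rightarrow> real"
  assumes "a \<le> b" "\<And>t. a \<le> t \<Longrightarrow> t \<le> b \<Longrightarrow> (f has_real_derivative f' t) (at t)"
    "\<And>t. a \<le> t \<Longrightarrow> t \<le> b \<Longrightarrow> (g has_real_derivative g' t) (at t)"
    "\<And>t. a \<le> t \<Longrightarrow> t \<le> b \<Longrightarrow> g' t \<le> f' t" "g a \<le> f a"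
  shows "g b \<le> f b"
proof -
  have "(\<lambda>t. f t - g t) a \<le> (\<lambda>t. f t - g t) b"
    by (rule deriv_nonneg_imp_mono[of a b _ "\<lambda>t. f' t - g' t"])
       (use assms in \<open>auto intro!: derivative_eq_intros\<close>)
  then show ?thesis using assms(5) by simp
qed

lemma weighted_deriv:
  fixes y :: "real \<Rightarrow> real"
  assumes t: "t > 0" and d: "(y has_real_derivative (g - real m / t * y t)) (at t)" and m: "m \<ge> 1"
  shows "((\<lambda>s. s^m * y s) has_real_derivative t^m * g) (at t)"
proof -
  have "((\<lambda>s. s^m * y s) has_real_derivative (real m * t^(m - Suc 0) * y t + (g - real m / t * y t) * t^m)) (at t)"
    by (rule DERIV_mult[OF DERIV_pow d])
  moreover have "real m * t^(m - Suc 0) * y t + (g - real m / t * y t) * t^m = t^m * g"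
  proof -
    obtain k where k: "m = Suc k" using m by (cases m) auto
    have e: "real m / t * y t * t = real m * y t" using t by simp
    show ?thesis unfolding k using t by (simp add: field_simps)
  qed
  ultimately show ?thesis by simp
qed

lemma powr_to0: "0<p \<Longrightarrow> ((\<lambda>t::real. t powr p) \<longlongrightarrow> 0) (at_right 0)"
  by (rule tendsto_zero_powrI[of "\<lambda>t. t"])
     (auto intro: tendsto_ident_at eventually_at_rightI[of 0 1] simp: )

lemma pow_to0: "0<m \<Longrightarrow> ((\<lambda>t::real. t ^ m) \<longlongrightarrow> 0) (at_right 0)"
proof -
  assume m: "0<m"
  have "((\<lambda>t::real. t ^ m) \<longlongrightarrow> 0 ^ m) (at_right 0)"
    by (intro tendsto_intros tendsto_ident_at)
  then show ?thesis using m by simp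
qed

lemma pow_powr: "0 < (t::real) \<Longrightarrow> N \<ge> 1 \<Longrightarrow> t^(N-1) * t powr a = t powr (real N - 1 + a)"
proof -
  assume t: "0<t" and N: "N \<ge> 1"
  have "t^(N-1) = t powr (real (N-1))" using t by (simp add: powr_realpow)
  also have "real (N-1) = real N - 1" using N by (simp add: of_nat_diff)
  finally show ?thesis by (simp add: powr_add)
qed

lemma u_to0:
  assumes "continuous_on {0..} u" "u 0 = (0::real)"
  shows "(u \<longlongrightarrow> 0) (at_right (0::real))"
proof -
  have "(u \<longlongrightarrow> u 0) (at 0 within {0..})" using assms(1) by (simp add: continuous_on_def)
  then have "(u \<longlongrightarrow> u 0) (at 0 within {0<..})" by (rule tendsto_within_subset) auto
  then show ?thesis using assms(2) by simp
qed

lemma alg: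
  fixes n a E X :: real
  assumes "n > 0" "n + a > 0" "2 + a > 0"
  shows "E / ((n+a)*(2+a)) * (X/n - X/(n+2+a)) = X * (1/((n+a)*n*(n+2+a)) * E)"
proof -
  have m: "n+2+a > 0" using assms by simp
  have "X/n - X/(n+2+a) = X * (2+a) / (n*(n+2+a))" using assms m by (simp add: field_simps)
  then have "E / ((n+a)*(2+a)) * (X/n - X/(n+2+a)) = E / ((n+a)*(2+a)) * (X * (2+a) / (n*(n+2+a)))" by simp
  also have "\<dots> = X * E * ((2+a) / ((n+a)*(2+a)*(n*(n+2+a))))" by (simp add: algebra_simps)
  also have "(2+a) / ((n+a)*(2+a)*(n*(n+2+a))) = 1/((n+a)*n*(n+2+a))"
  proof -
    have "(n+a)*(2+a)*(n*(n+2+a)) = (2+a)*((n+a)*n*(n+2+a))" by (simp add: algebra_simps)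
    moreover have "2+a \<noteq> 0" using assms by simp
    ultimately show ?thesis by simp
  qed
  finally show ?thesis by (simp add: algebra_simps)
qed

lemma bound_of_vneg:
  fixes N :: nat and \<alpha> :: real and u u1 v v1 :: "real \<Rightarrow> real"
  assumes N3: "N \<ge> 3" and a2: "\<alpha> > -2"
    and D: "\<And>r. 0 < r \<Longrightarrow>
            (u has_real_derivative u1 r) (at r) \<and>
            (u1 has_real_derivative (v r - (real N - 1) / r * u1 r)) (at r) \<and>
            (v has_real_derivative v1 r) (at r) \<and>
            (v1 has_real_derivative (r powr \<alpha> * exp (u r) - (real N - 1) / r * v1 r)) (at r)"
    and l1: "(u1 \<longlongrightarrow> 0) (at_right 0)"
    and l3: "((\<lambda>r. r ^ (N - 1) * v1 r) \<longlongrightarrow> 0) (at_right 0)"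
    and cont: "continuous_on {0..} u" and u0: "u 0 = 0"
    and vneg: "\<And>r. 0 < r \<Longrightarrow> v r \<le> 0"
  shows "\<And>r. 0 < r \<Longrightarrow> u r \<le> - (4 + \<alpha>) * ln r
      - ln (1 / ((real N + \<alpha>) * real N * (real N + 2 + \<alpha>)) / (4 + \<alpha>))"
proof -
  define n where "n = real N"
  have n3: "n \<ge> 3" using N3 unfolding n_def by simp
  have N1: "N - 1 \<ge> 1" using N3 by simp
  have N1': "N \<ge> 1" using N3 by simp
  have rN: "real N - 1 = real (N - 1)" using N3 by (simp add: of_nat_diff)
  have du: "\<And>t. 0<t \<Longrightarrow> (u has_real_derivative u1 t) (at t)" using D by blast
  have dv: "\<And>t. 0<t \<Longrightarrow> (v has_real_derivative v1 t) (at t)" using D by blast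
  have dz: "((\<lambda>s. s^(N-1) * u1 s) has_real_derivative t^(N-1) * v t) (at t)" if t: "0<t" for t
  proof (rule weighted_deriv[OF t _ N1])
    show "(u1 has_real_derivative (v t - real (N-1) / t * u1 t)) (at t)" using D[OF t] unfolding rN by blast
  qed
  have dw: "((\<lambda>s. s^(N-1) * v1 s) has_real_derivative t^(N-1) * (t powr \<alpha> * exp (u t))) (at t)" if t: "0<t" for t
  proof (rule weighted_deriv[OF t _ N1])
    show "(v1 has_real_derivative (t powr \<alpha> * exp (u t) - real (N-1) / t * v1 t)) (at t)" using D[OF t] unfolding rN by blast
  qed
  have z: "\<And>t. 0<t \<Longrightarrow> t^(N-1) * u1 t \<le> 0"
  proof -
    fix t :: real assume t: "0<t"
    have "0 \<le> (\<lambda>s. - (s^(N-1) * u1 s)) t"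
    proof (rule lim_le[OF t])
      show "((\<lambda>s. - (s^(N-1) * u1 s)) has_real_derivative - (s^(N-1) * v s)) (at s)" if "0<s" for s
        using dz[OF that] by (rule DERIV_minus)
      show "0 \<le> - (s^(N-1) * v s)" if "0<s" for s
        using vneg[OF that] that by (simp add: mult_nonneg_nonpos)
      have "((\<lambda>s. s^(N-1) * u1 s) \<longlongrightarrow> 0 * 0) (at_right 0)"
        by (intro tendsto_mult pow_to0 l1) (use N1 in auto)
      then show "((\<lambda>s. - (s^(N-1) * u1 s)) \<longlongrightarrow> 0) (at_right 0)"
        using tendsto_minus by fastforce
    qed
    then show "t^(N-1) * u1 t \<le> 0" by simp
  qed
  have u1neg: "u1 t \<le> 0" if t: "0<t" for t
  proof -
    have "0 < t^(N-1)" using t by simp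
    then show ?thesis using z[OF t] mult_pos_pos[of "t^(N-1)" "u1 t"] by linarith
  qed
  have uanti: "\<And>a b. 0<a \<Longrightarrow> a \<le> b \<Longrightarrow> u b \<le> u a"
    by (rule deriv_nonpos_imp_antimono[of _ _ u u1]) (use du u1neg in auto)
  have v1bd: "exp (u s) * s powr (n - 1 + (1+\<alpha>)) / (n+\<alpha>) \<le> s^(N-1) * v1 s" if s: "0<s" for s
  proof -
    have na: "n + \<alpha> > 0" using n3 a2 by simp
    have "0 \<le> (\<lambda>t. t^(N-1) * v1 t - exp (u s) * t powr (n+\<alpha>) / (n+\<alpha>)) s"
    proof (rule lim_le[OF s, where f = "\<lambda>t. t^(N-1) * v1 t - exp (u s) * t powr (n+\<alpha>) / (n+\<alpha>)"
          and f' = "\<lambda>t. t^(N-1) * (t powr \<alpha> * exp (u t)) - exp (u s) * ((n+\<alpha>) * t powr (n+\<alpha>-1)) / (n+\<alpha>)"])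
      fix t :: real assume t: "0<t" "t \<le> s"
      show "((\<lambda>t. t^(N-1) * v1 t - exp (u s) * t powr (n+\<alpha>) / (n+\<alpha>)) has_real_derivative
          t^(N-1) * (t powr \<alpha> * exp (u t)) - exp (u s) * ((n+\<alpha>) * t powr (n+\<alpha>-1)) / (n+\<alpha>)) (at t)"
        by (rule DERIV_diff[OF dw[OF t(1)] DERIV_cdivide[OF DERIV_cmult[OF has_real_derivative_powr[OF t(1)]]]])
      have e: "exp (u s) \<le> exp (u t)" using uanti[OF t] by simp
      have A: "t^(N-1) * (t powr \<alpha> * exp (u t)) = t powr (n+\<alpha>-1) * exp (u t)"
        using pow_powr[OF t(1), of N \<alpha>] N3 unfolding n_def by (simp add: algebra_simps)
      have B: "exp (u s) * ((n+\<alpha>) * t powr (n+\<alpha>-1)) / (n+\<alpha>) = t powr (n+\<alpha>-1) * exp (u s)"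
        using na by simp
      have C: "t powr (n+\<alpha>-1) * exp (u s) \<le> t powr (n+\<alpha>-1) * exp (u t)"
        by (rule mult_left_mono[OF e]) simp
      show "0 \<le> t^(N-1) * (t powr \<alpha> * exp (u t)) - exp (u s) * ((n+\<alpha>) * t powr (n+\<alpha>-1)) / (n+\<alpha>)"
        using A B C by linarith
    next
      have "((\<lambda>t. t^(N-1) * v1 t - exp (u s) * t powr (n+\<alpha>) / (n+\<alpha>)) \<longlongrightarrow> 0 - exp (u s) * 0 / (n+\<alpha>)) (at_right 0)"
        by (intro tendsto_intros l3 powr_to0) (use na in auto)
      then show "((\<lambda>t. t^(N-1) * v1 t - exp (u s) * t powr (n+\<alpha>) / (n+\<alpha>)) \<longlongrightarrow> 0) (at_right 0)" by simp
    qed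
    then show ?thesis by (simp add: algebra_simps)
  qed
  have v1bd': "exp (u s) * s powr (1+\<alpha>) / (n+\<alpha>) \<le> v1 s" if s: "0<s" for s
  proof -
    have p: "s powr (n - 1 + (1+\<alpha>)) = s^(N-1) * s powr (1+\<alpha>)"
      using pow_powr[OF s, of N "1+\<alpha>"] N3 unfolding n_def by simp
    have sp: "s^(N-1) > 0" using s by simp
    have "s^(N-1) * (exp (u s) * s powr (1+\<alpha>) / (n+\<alpha>)) \<le> s^(N-1) * v1 s"
      using v1bd[OF s] unfolding p by (simp add: algebra_simps)
    then show ?thesis using sp by (rule mult_left_le_imp_le)
  qed
  have zlim: "((\<lambda>s. s^(N-1) * u1 s) \<longlongrightarrow> 0) (at_right 0)"
  proof -
    have "((\<lambda>s. s^(N-1) * u1 s) \<longlongrightarrow> 0 * 0) (at_right 0)"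
      by (intro tendsto_mult pow_to0 l1) (use N1 in auto)
    then show ?thesis by simp
  qed
  define c where "c = 1 / ((n + \<alpha>) * n * (n + 2 + \<alpha>))"
  have na: "n + \<alpha> > 0" using n3 a2 by simp
  have cpos: "c > 0" unfolding c_def using na n3 a2 by simp
  have U: "c * exp (u r) * r powr (3+\<alpha>) \<le> - u1 r" if r: "0<r" for r
  proof -
    define K where "K = exp (u r) / ((n+\<alpha>)*(2+\<alpha>))"
    define R where "R = r powr (2+\<alpha>)"
    define G where "G = (\<lambda>x. - v x - K * (R - x powr (2+\<alpha>)))"
    define G' where "G' = (\<lambda>x. - v1 x - K * (0 - (2+\<alpha>) * x powr (2+\<alpha>-1)))"
    have Gnn: "0 \<le> G t" if t: "0<t" "t \<le> r" for t
    proof -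
      have "G r \<le> G t"
      proof (rule deriv_nonpos_imp_antimono[of t r G G'])
        fix x assume x: "x \<in> {t..r}"
        then have x0: "0 < x" "x \<le> r" using t by auto
        show "(G has_real_derivative G' x) (at x)"
          unfolding G_def G'_def
          by (rule DERIV_diff[OF DERIV_minus[OF dv[OF x0(1)]] DERIV_cmult[OF DERIV_diff[OF DERIV_const has_real_derivative_powr[OF x0(1)]]]])
        have e: "exp (u r) \<le> exp (u x)" using uanti[OF x0] by simp
        have k: "K * ((2+\<alpha>) * x powr (2+\<alpha>-1)) = exp (u r) * x powr (1+\<alpha>) / (n+\<alpha>)"
        proof -
          have kk: "K * (2+\<alpha>) = exp (u r)/(n+\<alpha>)" unfolding K_def
          proof -
            have h2: "2+\<alpha> \<noteq> 0" using a2 by simp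
            show "exp (u r) / ((n + \<alpha>) * (2 + \<alpha>)) * (2 + \<alpha>) = exp (u r) / (n + \<alpha>)"
              using nonzero_mult_divide_mult_cancel_right[OF h2, of "exp (u r)" "n+\<alpha>"] by simp
          qed
          have p: "2+\<alpha>-1 = 1+\<alpha>" by simp
          have "K * ((2+\<alpha>) * x powr (2+\<alpha>-1)) = (K * (2+\<alpha>)) * x powr (1+\<alpha>)" unfolding p by (simp add: mult.assoc)
          also have "\<dots> = exp (u r) * x powr (1+\<alpha>) / (n+\<alpha>)" unfolding kk by simp
          finally show ?thesis .
        qed
        have "exp (u r) * x powr (1+\<alpha>) / (n+\<alpha>) \<le> exp (u x) * x powr (1+\<alpha>) / (n+\<alpha>)"
          using e na by (simp add: divide_right_mono mult_right_mono)
        moreover have "K * (0 - (2+\<alpha>) * x powr (2+\<alpha>-1)) = - (K * ((2+\<alpha>) * x powr (2+\<alpha>-1)))" by simp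
        ultimately show "G' x \<le> 0" unfolding G'_def using v1bd'[OF x0(1)] k by linarith
      qed (use t in auto)
      moreover have "G r = - v r" unfolding G_def R_def by simp
      ultimately show ?thesis using vneg[OF r] by linarith
    qed
    define m where "m = n + 2 + \<alpha>"
    have mpos: "m > 0" unfolding m_def using na by simp
    define H where "H = (\<lambda>t. - (t^(N-1) * u1 t) - K * (R * t^N / real N - t powr m / m))"
    define H' where "H' = (\<lambda>t. - (t^(N-1) * v t) - K * (R * (real N * t^(N - Suc 0)) / real N - (m * t powr (m-1)) / m))"
    have "0 \<le> H r"
    proof (rule lim_le[OF r, where f = H and f' = H'])
      fix t :: real assume t: "0 < t" "t \<le> r"
      show "(H has_real_derivative H' t) (at t)"
        unfolding H_def H'_def
        by (rule DERIV_diff[OF DERIV_minus[OF dz[OF t(1)]] DERIV_cmult[OF DERIV_diff[OF DERIV_cdivide[OF DERIV_cmult[OF DERIV_pow]] DERIV_cdivide[OF has_real_derivative_powr[OF t(1)]]]]])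
      have Q: "t powr (m-1) = t^(N-1) * t powr (2+\<alpha>)"
      proof - have ex: "m - 1 = real N - 1 + (2+\<alpha>)" unfolding m_def n_def by simp
        show ?thesis unfolding ex by (rule pow_powr[OF t(1) N1', symmetric]) qed
      have e1: "R * (real N * t^(N - Suc 0)) / real N = R * t^(N-1)" using N3 by simp
      have e2: "(m * t powr (m-1)) / m = t^(N-1) * t powr (2+\<alpha>)" using mpos unfolding Q by simp
      have "H' t = -(t^(N-1) * v t) - K*(R*t^(N-1) - t^(N-1)*t powr(2+\<alpha>))" unfolding H'_def e1 e2 ..
      also have "\<dots> = t^(N-1) * G t" unfolding G_def by (simp add: algebra_simps)
      finally have "H' t = t^(N-1) * G t" .
      then show "0 \<le> H' t" using mult_nonneg_nonneg[OF _ Gnn[OF t], of "t^(N-1)"] t by simp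
    next
      have t1: "((\<lambda>t::real. t^N) \<longlongrightarrow> 0) (at_right 0)" by (rule pow_to0) (use N3 in simp)
      have t2: "((\<lambda>t. t powr m) \<longlongrightarrow> 0) (at_right 0)" using mpos by (rule powr_to0)
      have "(H \<longlongrightarrow> - 0 - K * (R * 0 / real N - 0 / m)) (at_right 0)"
        unfolding H_def
        by (rule tendsto_diff[OF tendsto_minus[OF zlim] tendsto_mult[OF tendsto_const[of K] tendsto_diff[OF tendsto_divide[OF tendsto_mult[OF tendsto_const[of R] t1] tendsto_const[of "real N"]] tendsto_divide[OF t2 tendsto_const[of m]]]]]) (use N3 mpos in auto)
      moreover have "- 0 - K * (R * 0 / real N - 0 / m) = (0::real)" by simp
      ultimately show "(H \<longlongrightarrow> 0) (at_right 0)" by argo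
    qed
    have S: "r powr (3+\<alpha>) = R * r"
    proof -
      have "r powr (3+\<alpha>) = r powr ((2+\<alpha>) + 1)" by simp
      also have "\<dots> = R * r powr 1" unfolding R_def by (rule powr_add)
      finally show ?thesis using r by simp
    qed
    have rN: "r^N = r^(N-1) * r"
    proof -
      have "N = Suc (N-1)" using N3 by simp
      then have "r^N = r * r^(N-1)" by (metis power_Suc)
      then show ?thesis by simp
    qed
    have r1: "R * r^N = r^(N-1) * r powr (3+\<alpha>)"
      unfolding rN S by simp
    have r2: "r powr m = r^(N-1) * r powr (3+\<alpha>)"
    proof - have ex: "m = real N - 1 + (3+\<alpha>)" unfolding m_def n_def by simp
      show ?thesis unfolding ex by (rule pow_powr[OF r N1', symmetric]) qed
    have A: "K * (r^(N-1) * r powr (3+\<alpha>) / n - r^(N-1) * r powr (3+\<alpha>) / m) = r^(N-1) * r powr (3+\<alpha>) * (c * exp (u r))"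
      unfolding K_def c_def m_def by (rule alg) (use n3 na a2 in auto)
    have B: "r^(N-1) * (c * exp (u r) * r powr (3+\<alpha>)) = r^(N-1) * r powr (3+\<alpha>) * (c * exp (u r))"
      by (simp add: mult_ac)
    have "r^(N-1) * (c * exp (u r) * r powr (3+\<alpha>)) = K * (R * r^N / real N - r powr m / m)"
      unfolding r1 r2 n_def[symmetric] using A B by linarith
    moreover have "r^(N-1) * (- u1 r) = - (r^(N-1) * u1 r)" by simp
    ultimately have "r^(N-1) * (c * exp (u r) * r powr (3+\<alpha>)) \<le> r^(N-1) * (- u1 r)"
      using \<open>0 \<le> H r\<close> unfolding H_def by linarith
    then show ?thesis by (rule mult_left_le_imp_le) (use r in simp)
  qed
  show "u r \<le> - (4 + \<alpha>) * ln r - ln (1 / ((real N + \<alpha>) * real N * (real N + 2 + \<alpha>)) / (4 + \<alpha>))"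
    if r: "0 < r" for r
  proof -
    have h4: "4 + \<alpha> > 0" using a2 by simp
    define Ef where "Ef = (\<lambda>t. exp (- u t) - c * t powr (4+\<alpha>) / (4+\<alpha>))"
    define Ef' where "Ef' = (\<lambda>t. exp (- u t) * (- u1 t) - c * ((4+\<alpha>) * t powr (4+\<alpha>-1)) / (4+\<alpha>))"
    have "1 \<le> Ef r"
    proof (rule lim_le[OF r, where f = Ef and f' = Ef'])
      fix t :: real assume t: "0<t" "t \<le> r"
      show "(Ef has_real_derivative Ef' t) (at t)" unfolding Ef_def Ef'_def
        by (rule DERIV_diff[OF DERIV_chain2[OF DERIV_exp DERIV_minus[OF du[OF t(1)]]] DERIV_cdivide[OF DERIV_cmult[OF has_real_derivative_powr[OF t(1)]]]])
      have p4: "c * ((4+\<alpha>) * t powr (4+\<alpha>-1)) / (4+\<alpha>) = c * t powr (3+\<alpha>)"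
      proof -
        have "4+\<alpha>-1 = 3+\<alpha>" by simp
        then show ?thesis using h4 by simp
      qed
      have M: "exp (- u t) * (c * exp (u t) * t powr (3+\<alpha>)) \<le> exp (- u t) * (- u1 t)"
        by (rule mult_left_mono[OF U[OF t(1)]]) simp
      have ee: "exp (- u t) * exp (u t) = 1" by (simp add: exp_minus)
      have "exp (- u t) * (c * exp (u t) * t powr (3+\<alpha>)) = (exp (- u t) * exp (u t)) * (c * t powr (3+\<alpha>))"
        by (simp add: mult_ac)
      then have "exp (- u t) * (c * exp (u t) * t powr (3+\<alpha>)) = c * t powr (3+\<alpha>)" unfolding ee by simp
      then show "0 \<le> Ef' t" unfolding Ef'_def p4 using M by linarith
    next
      have "(Ef \<longlongrightarrow> exp (- 0) - c * 0 / (4+\<alpha>)) (at_right 0)" unfolding Ef_def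
        by (rule tendsto_diff[OF tendsto_exp[OF tendsto_minus[OF u_to0[OF cont u0]]] tendsto_divide[OF tendsto_mult[OF tendsto_const powr_to0] tendsto_const]]) (use h4 in auto)
      moreover have "exp (- 0) - c * 0 / (4+\<alpha>) = (1::real)" by simp
      ultimately show "(Ef \<longlongrightarrow> 1) (at_right 0)" by metis
    qed
    define Y where "Y = c / (4+\<alpha>) * r powr (4+\<alpha>)"
    have Ypos: "Y > 0" unfolding Y_def using cpos h4 r by simp
    have "Y < exp (- u r)" using \<open>1 \<le> Ef r\<close> unfolding Ef_def Y_def by simp
    then have "ln Y < ln (exp (- u r))" using Ypos by (simp only: ln_less_cancel_iff exp_gt_zero)
    then have l: "ln Y < - u r" by simp
    have "ln Y = ln (c / (4+\<alpha>)) + (4+\<alpha>) * ln r"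
    proof -
      have "ln Y = ln (c / (4+\<alpha>)) + ln (r powr (4+\<alpha>))"
        unfolding Y_def by (rule ln_mult_pos) (use cpos h4 r in simp_all)
      also have "ln (r powr (4+\<alpha>)) = (4+\<alpha>) * ln r" using r by (simp add: ln_powr)
      finally show ?thesis .
    qed
    then have "u r \<le> - (4 + \<alpha>) * ln r - ln (c / (4+\<alpha>))" using l by linarith
    then show ?thesis unfolding c_def n_def .
  qed
qed

lemma dpolyk: "((\<lambda>s. C * (s - x)^n) has_real_derivative C * (real n * (s - x)^(n - 1))) (at s)"
proof -
  have "((\<lambda>s. C * (s - x)^n) has_real_derivative C * (of_nat n * ((1 - 0) * (s - x)^(n - Suc 0)))) (at s)"
    by (rule DERIV_cmult[OF DERIV_power[OF DERIV_diff[OF DERIV_ident DERIV_const]]])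
  then show ?thesis by simp
qed

lemma vneg_lemma:
  fixes N :: nat and \<alpha> :: real and u u1 v v1 :: "real \<Rightarrow> real"
  assumes N3: "N \<ge> 3" and a2: "\<alpha> > -2"
    and D: "\<And>r. 0 < r \<Longrightarrow>
            (u has_real_derivative u1 r) (at r) \<and>
            (u1 has_real_derivative (v r - (real N - 1) / r * u1 r)) (at r) \<and>
            (v has_real_derivative v1 r) (at r) \<and>
            (v1 has_real_derivative (r powr \<alpha> * exp (u r) - (real N - 1) / r * v1 r)) (at r)"
    and l3: "((\<lambda>r. r ^ (N - 1) * v1 r) \<longlongrightarrow> 0) (at_right 0)"
    and cont: "continuous_on {0..} u"
    and r1: "0 < r1"
  shows "v r1 \<le> 0"
proof (rule ccontr)
  assume "\<not> v r1 \<le> 0"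
  then have dpos: "v r1 > 0" by simp
  define \<delta> where "\<delta> = v r1"
  have N1: "N - 1 \<ge> 1" using N3 by simp
  have N1': "N \<ge> 1" using N3 by simp
  have rN: "real N - 1 = real (N - 1)" using N3 by (simp add: of_nat_diff)
  have du: "\<And>t. 0<t \<Longrightarrow> (u has_real_derivative u1 t) (at t)" using D by blast
  have dv: "\<And>t. 0<t \<Longrightarrow> (v has_real_derivative v1 t) (at t)" using D by blast
  have dz: "((\<lambda>s. s^(N-1) * u1 s) has_real_derivative t^(N-1) * v t) (at t)" if t: "0<t" for t
  proof (rule weighted_deriv[OF t _ N1])
    show "(u1 has_real_derivative (v t - real (N-1) / t * u1 t)) (at t)" using D[OF t] unfolding rN by blast
  qed
  have dw: "((\<lambda>s. s^(N-1) * v1 s) has_real_derivative t^(N-1) * (t powr \<alpha> * exp (u t))) (at t)" if t: "0<t" for t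
  proof (rule weighted_deriv[OF t _ N1])
    show "(v1 has_real_derivative (t powr \<alpha> * exp (u t) - real (N-1) / t * v1 t)) (at t)" using D[OF t] unfolding rN by blast
  qed
  have wnn: "0 \<le> t^(N-1) * v1 t" if t: "0<t" for t
    by (rule lim_le[OF t, where f = "\<lambda>s. s^(N-1) * v1 s" and f' = "\<lambda>s. s^(N-1) * (s powr \<alpha> * exp (u s))"])
       (use dw l3 in auto)
  have v1nn: "0 \<le> v1 t" if t: "0<t" for t
  proof -
    have "0 < t^(N-1)" using t by simp
    then show ?thesis using wnn[OF t] mult_pos_neg[of "t^(N-1)" "v1 t"] by linarith
  qed
  have vmono: "v a \<le> v b" if "0<a" "a\<le>b" for a b
    by (rule deriv_nonneg_imp_mono[of a b v v1]) (use that dv v1nn in auto)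
  have vd: "\<delta> \<le> v r" if "r1 \<le> r" for r unfolding \<delta>_def using vmono[OF r1 that] .
  define c1 where "c1 = r1^(N-1) * u1 r1 - \<delta> * r1^N / real N"
  have zlow: "\<delta> * r^N / real N + c1 \<le> r^(N-1) * u1 r" if r: "r1 \<le> r" for r
  proof -
    have "(\<lambda>s. r1^(N-1) * u1 r1 + \<delta> * (s^N - r1^N) / real N) r \<le> (\<lambda>s. s^(N-1) * u1 s) r"
    proof (rule compare[OF r, where f' = "\<lambda>s. s^(N-1) * v s" and g' = "\<lambda>s. 0 + \<delta> * (real N * s^(N - Suc 0) - 0) / real N"])
      fix t assume t: "r1 \<le> t" "t \<le> r"
      then have t0: "0 < t" using r1 by simp
      show "((\<lambda>s. s^(N-1) * u1 s) has_real_derivative t^(N-1) * v t) (at t)" by (rule dz[OF t0])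
      show "((\<lambda>s. r1^(N-1) * u1 r1 + \<delta> * (s^N - r1^N) / real N) has_real_derivative 0 + \<delta> * (real N * t^(N - Suc 0) - 0) / real N) (at t)"
        by (rule DERIV_add[OF DERIV_const DERIV_cdivide[OF DERIV_cmult[OF DERIV_diff[OF DERIV_pow DERIV_const]]]])
      have "0 + \<delta> * (real N * t^(N - Suc 0) - 0) / real N = t^(N-1) * \<delta>" using N3 by simp
      moreover have "t^(N-1) * \<delta> \<le> t^(N-1) * v t" using vd[OF t(1)] t0 by (simp add: mult_left_mono)
      ultimately show "0 + \<delta> * (real N * t^(N - Suc 0) - 0) / real N \<le> t^(N-1) * v t" by simp
    qed simp
    then show ?thesis unfolding c1_def by (simp add: algebra_simps diff_divide_distrib)
  qed
  have r1pos: "0 < r1" by (rule r1)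
  define r2 where "r2 = max (max 1 r1) (max (2 * real N / \<delta>) (\<bar>c1\<bar> + 1))"
  have r2ge: "1 \<le> r2" "r1 \<le> r2" unfolding r2_def by auto
  have u1ge: "1 \<le> u1 r" if r: "r2 \<le> r" for r
  proof (rule ccontr)
    assume nu: "\<not> 1 \<le> u1 r"
    have r1le: "r1 \<le> r" "1 \<le> r" "2*real N/\<delta> \<le> r" "\<bar>c1\<bar>+1 \<le> r" using r unfolding r2_def by auto
    define P where "P = r^(N-1)"
    have Pr: "r \<le> P"
    proof -
      have "r^1 \<le> r^(N-1)" by (rule power_increasing[OF N1 r1le(2)])
      then show ?thesis unfolding P_def by simp
    qed
    have rNP: "r^N = P * r"
    proof -
      have "N = Suc (N-1)" using N3 by simp
      then have "r^N = r * r^(N-1)" by (metis power_Suc)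
      then show ?thesis unfolding P_def by simp
    qed
    have zl: "\<delta> * (P*r) / real N + c1 \<le> P * u1 r" using zlow[OF r1le(1)] unfolding rNP P_def by simp
    have Npos: "0 < real N" using N3 by simp
    have dr: "2 \<le> \<delta>*r/real N"
    proof -
      have "2*real N/\<delta> \<le> r" by (rule r1le(3))
      then have "2*real N \<le> r * \<delta>" using dpos unfolding \<delta>_def by (simp add: divide_le_eq)
      then show ?thesis using Npos by (simp add: le_divide_eq mult.commute)
    qed
    have Ppos: "0 < P" using Pr r1le(2) by simp
    have "P * 2 \<le> P * (\<delta>*r/real N)" using dr Ppos by (intro mult_left_mono) auto
    moreover have "P * (\<delta>*r/real N) = \<delta> * (P*r) / real N" by simp
    moreover have "P * u1 r < P * 1" using nu Ppos by (simp add: mult_strict_left_mono)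
    ultimately show False using zl Pr r1le(4) by linarith
  qed
  have ulin: "u r2 + (r - r2) \<le> u r" if r: "r2 \<le> r" for r
  proof (rule compare[OF r, where f' = u1 and g' = "\<lambda>s. 0 + (1 - 0)"])
    fix t assume t: "r2 \<le> t" "t \<le> r"
    then have t0: "0 < t" using r2ge by simp
    show "(u has_real_derivative u1 t) (at t)" by (rule du[OF t0])
    show "((\<lambda>s. u r2 + (s - r2)) has_real_derivative 0 + (1 - 0)) (at t)"
      by (rule DERIV_add[OF DERIV_const DERIV_diff[OF DERIV_ident DERIV_const]])
    show "0 + (1 - 0) \<le> u1 t" using u1ge[OF t(1)] by simp
  qed simp
  have umono: "u a \<le> u b" if "r2 \<le> a" "a \<le> b" for a b
    by (rule deriv_nonneg_imp_mono[of a b u u1]) (use that du u1ge r2ge in \<open>auto intro: order_trans[OF zero_le_one]\<close>)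
  have vpos: "0 \<le> v r" if "r2 \<le> r" for r using vd[of r] that r2ge dpos unfolding \<delta>_def by linarith
  have u1nn: "0 \<le> u1 r" if "r2 \<le> r" for r using u1ge[OF that] by linarith
  have step: "u x + exp (u x) * h^4 / (24 * ((R'+1)^(N-1))^2) \<le> u (x + h)"
    if x: "r2 \<le> R'" "R' \<le> x" "0 \<le> h" "x + h \<le> R' + 1" for x h R'
  proof -
    define P0 where "P0 = (R'+1)^(N-1)"
    define M where "M = u x"
    define E where "E = exp M"
    define C2 where "C2 = E / P0"
    have P0ge: "1 \<le> P0" unfolding P0_def using r2ge x by simp
    have Epos: "0 < E" unfolding E_def by simp
    have sx: "r2 \<le> s \<and> 1 \<le> s \<and> 0 < s \<and> s \<le> R'+1" if "x \<le> s" "s \<le> x+h" for s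
      using that x r2ge by auto
    have uM: "E \<le> exp (u s)" if "x \<le> s" "s \<le> x+h" for s
      unfolding E_def M_def using umono[of x s] that x by simp
    have Ps: "s^(N-1) \<le> P0" "1 \<le> s^(N-1)" if "x \<le> s" "s \<le> x+h" for s
      unfolding P0_def using sx[OF that] by (auto intro: power_mono)
    have wlow: "E * (s - x) \<le> s^(N-1) * v1 s" if s: "x \<le> s" "s \<le> x+h" for s
    proof (rule compare[OF s(1), where f = "\<lambda>t. t^(N-1) * v1 t" and g = "\<lambda>t. E * (t - x)"
          and f' = "\<lambda>t. t^(N-1) * (t powr \<alpha> * exp (u t))" and g' = "\<lambda>t. E * (1 - 0)"])
      fix t assume t: "x \<le> t" "t \<le> s"
      then have tt: "x \<le> t" "t \<le> x+h" using s by auto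
      note st = sx[OF tt]
      show "((\<lambda>t. t^(N-1) * v1 t) has_real_derivative t^(N-1) * (t powr \<alpha> * exp (u t))) (at t)"
        using dw st by auto
      show "((\<lambda>t. E * (t - x)) has_real_derivative E * (1 - 0)) (at t)"
        by (rule DERIV_cmult[OF DERIV_diff[OF DERIV_ident DERIV_const]])
      have p1: "1 \<le> t^(N-1) * t powr \<alpha>"
      proof -
        have "t^(N-1) * t powr \<alpha> = t powr (real N - 1 + \<alpha>)" using pow_powr[of t N \<alpha>] st N1' by simp
        moreover have "1 \<le> t powr (real N - 1 + \<alpha>)" using st N3 a2 by (intro ge_one_powr_ge_zero) auto
        ultimately show ?thesis by simp
      qed
      have "1 * E \<le> (t^(N-1) * t powr \<alpha>) * exp (u t)"
        by (rule mult_mono[OF p1 uM[OF tt]]) (use Epos p1 in auto)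
      then show "E * (1 - 0) \<le> t^(N-1) * (t powr \<alpha> * exp (u t))" by (simp add: mult_ac)
    next
      show "E * (x - x) \<le> x^(N-1) * v1 x" using wnn[of x] sx[of x] x by simp
    qed
    have v1low: "C2 * (s - x) \<le> v1 s" if s: "x \<le> s" "s \<le> x+h" for s
    proof -
      have "s^(N-1) * v1 s \<le> P0 * v1 s" by (rule mult_right_mono[OF Ps(1)[OF s] v1nn]) (use sx[OF s] in auto)
      then have "E * (s - x) \<le> P0 * v1 s" using wlow[OF s] by linarith
      then show ?thesis unfolding C2_def using P0ge by (simp add: divide_le_eq mult.commute)
    qed
    have vlow: "C2/2 * (s - x)^2 \<le> v s" if s: "x \<le> s" "s \<le> x+h" for s
    proof (rule compare[OF s(1), where f = v and g = "\<lambda>t. C2/2 * (t - x)^2"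
          and f' = v1 and g' = "\<lambda>t. C2/2 * (real 2 * (t - x)^(2-1))"])
      fix t assume t: "x \<le> t" "t \<le> s"
      then have tt: "x \<le> t" "t \<le> x+h" using s by auto
      note st = sx[OF tt]
      show "(v has_real_derivative v1 t) (at t)" using dv st by auto
      show "((\<lambda>t. C2/2 * (t - x)^2) has_real_derivative C2/2 * (real 2 * (t - x)^(2-1))) (at t)"
        by (rule dpolyk)
      have "C2/2 * (real 2 * (t - x)^(2-1)) = C2 * (t - x)" by simp
      then show "C2/2 * (real 2 * (t - x)^(2-1)) \<le> v1 t" using v1low[OF tt] by linarith
    next
      show "C2/2 * (x - x)^2 \<le> v x" using vpos[of x] x by simp
    qed
    have zlow2: "C2/6 * (s - x)^3 \<le> s^(N-1) * u1 s" if s: "x \<le> s" "s \<le> x+h" for s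
    proof (rule compare[OF s(1), where f = "\<lambda>t. t^(N-1) * u1 t" and g = "\<lambda>t. C2/6 * (t - x)^3"
          and f' = "\<lambda>t. t^(N-1) * v t" and g' = "\<lambda>t. C2/6 * (real 3 * (t - x)^(3-1))"])
      fix t assume t: "x \<le> t" "t \<le> s"
      then have tt: "x \<le> t" "t \<le> x+h" using s by auto
      note st = sx[OF tt]
      show "((\<lambda>t. t^(N-1) * u1 t) has_real_derivative t^(N-1) * v t) (at t)" using dz st by auto
      show "((\<lambda>t. C2/6 * (t - x)^3) has_real_derivative C2/6 * (real 3 * (t - x)^(3-1))) (at t)"
        by (rule dpolyk)
      have "1 * v t \<le> t^(N-1) * v t" by (rule mult_right_mono[OF Ps(2)[OF tt] vpos]) (use st in auto)
      moreover have "C2/6 * (real 3 * (t - x)^(3-1)) = C2/2 * (t - x)^2" by simp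
      ultimately show "C2/6 * (real 3 * (t - x)^(3-1)) \<le> t^(N-1) * v t" using vlow[OF tt] by linarith
    next
      show "C2/6 * (x - x)^3 \<le> x^(N-1) * u1 x" using u1nn[of x] sx[of x] x by simp
    qed
    have u1low: "C2/(6*P0) * (s - x)^3 \<le> u1 s" if s: "x \<le> s" "s \<le> x+h" for s
    proof -
      have "s^(N-1) * u1 s \<le> P0 * u1 s" by (rule mult_right_mono[OF Ps(1)[OF s] u1nn]) (use sx[OF s] in auto)
      then have "C2/6 * (s - x)^3 \<le> P0 * u1 s" using zlow2[OF s] by linarith
      then show ?thesis using P0ge by (simp add: divide_le_eq mult_ac)
    qed
    have ulow: "M + C2/(24*P0) * (s - x)^4 \<le> u s" if s: "x \<le> s" "s \<le> x+h" for s
    proof (rule compare[OF s(1), where f = u and g = "\<lambda>t. M + C2/(24*P0) * (t - x)^4"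
          and f' = u1 and g' = "\<lambda>t. 0 + C2/(24*P0) * (real 4 * (t - x)^(4-1))"])
      fix t assume t: "x \<le> t" "t \<le> s"
      then have tt: "x \<le> t" "t \<le> x+h" using s by auto
      note st = sx[OF tt]
      show "(u has_real_derivative u1 t) (at t)" using du st by auto
      show "((\<lambda>t. M + C2/(24*P0) * (t - x)^4) has_real_derivative 0 + C2/(24*P0) * (real 4 * (t - x)^(4-1))) (at t)"
        by (rule DERIV_add[OF DERIV_const dpolyk])
      have "C2/(24*P0) * (real 4 * (t - x)^(4-1)) = C2/(6*P0) * (t - x)^3" by simp
      then show "0 + C2/(24*P0) * (real 4 * (t - x)^(4-1)) \<le> u1 t" using u1low[OF tt] by linarith
    next
      show "M + C2/(24*P0) * (x - x)^4 \<le> u x" unfolding M_def by simp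
    qed
    have "M + C2/(24*P0) * h^4 \<le> u (x+h)" using ulow[of "x+h"] x by simp
    moreover have "C2/(24*P0) * h^4 = exp (u x) * h^4 / (24 * ((R'+1)^(N-1))^2)"
      unfolding C2_def E_def M_def P0_def by (simp add: power2_eq_square)
    ultimately show ?thesis unfolding M_def by simp
  qed
  define q where "q = exp (-1/4::real)"
  have q: "0 < q" "q < 1" unfolding q_def by auto
  define \<epsilon> where "\<epsilon> = (1-q)^4 / (24 * exp (r2 - u r2 + 1))"
  have epos: "0 < \<epsilon>" unfolding \<epsilon>_def using q by simp
  have "((\<lambda>x::real. x^(2*(N-1)) / exp x) \<longlongrightarrow> 0) at_top" by (rule tendsto_power_div_exp_0)
  then have "eventually (\<lambda>x. x^(2*(N-1)) / exp x < \<epsilon>) at_top" by (rule order_tendstoD(2)) (rule epos)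
  then obtain X0 where X0: "\<And>x. x \<ge> X0 \<Longrightarrow> x^(2*(N-1)) / exp x < \<epsilon>" by (auto simp: eventually_at_top_linorder)
  define R where "R = max r2 X0"
  have R: "r2 \<le> R" "X0 \<le> R+1" unfolding R_def by auto
  define P0 where "P0 = (R+1)^(N-1)"
  define B where "B = 24 * P0^2 * exp (- u R)"
  have Bnn: "0 \<le> B" unfolding B_def by simp
  have Bbd: "B \<le> (1-q)^4"
  proof -
    have e1: "exp (- u R) \<le> exp (r2 - u r2 + 1) * exp (-(R+1))"
      using ulin[OF R(1)] by (simp add: exp_add[symmetric])
    have e2: "P0^2 * exp (-(R+1)) = (R+1)^(2*(N-1)) / exp (R+1)"
    proof -
      have p: "P0^2 = (R+1)^((N-1)*2)" unfolding P0_def by (simp add: power_mult)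
      have ex: "exp (-(R+1)) = 1 / exp (R+1)" using exp_minus[of "R+1"] by (simp only: inverse_eq_divide)
      show ?thesis unfolding p ex by (simp add: mult.commute)
    qed
    have e3: "(R+1)^(2*(N-1)) / exp (R+1) < \<epsilon>" using X0[OF R(2)] .
    have "B \<le> 24 * P0^2 * (exp (r2 - u r2 + 1) * exp (-(R+1)))"
      unfolding B_def by (rule mult_left_mono[OF e1]) simp
    also have "\<dots> = 24 * exp (r2 - u r2 + 1) * (P0^2 * exp (-(R+1)))" by (simp add: mult_ac)
    also have "\<dots> \<le> 24 * exp (r2 - u r2 + 1) * \<epsilon>" unfolding e2 using e3 by (intro mult_left_mono) auto
    also have "\<dots> = (1-q)^4" unfolding \<epsilon>_def by simp
    finally show ?thesis .
  qed
  define A where "A = root 4 B"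
  have Ann: "0 \<le> A" unfolding A_def using Bnn by (simp add: real_root_ge_zero)
  have A4: "A^4 = B" unfolding A_def using Bnn by simp
  have Aq: "A \<le> 1 - q"
  proof -
    have "A^4 \<le> (1-q)^4" using A4 Bbd by simp
    then show ?thesis using Ann q by (subst (asm) power_mono_iff) auto
  qed
  define a where "a = (\<lambda>k. R + (\<Sum>j<k. A * q^j))"
  have asuc: "a (Suc k) = a k + A * q^k" for k unfolding a_def by simp
  have aR: "R \<le> a k" for k unfolding a_def using Ann q by (auto intro!: sum_nonneg)
  have aR1: "a k \<le> R + 1" for k
  proof -
    have "(\<Sum>j<k. A * q^j) = A * ((1 - q^k) / (1 - q))" using q by (simp add: sum_distrib_left[symmetric] sum_gp_strict)
    also have "\<dots> \<le> A * (1 / (1-q))" using q Ann by (intro mult_left_mono divide_right_mono) auto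
    also have "\<dots> \<le> 1" using Aq q by (simp add: divide_le_eq)
    finally show ?thesis unfolding a_def by simp
  qed
  have ugrow: "u R + real k \<le> u (a k)" for k
  proof (induction k)
    case 0 then show ?case unfolding a_def by simp
  next
    case (Suc k)
    have st: "u (a k) + exp (u (a k)) * (A*q^k)^4 / (24 * ((R+1)^(N-1))^2) \<le> u (a k + A*q^k)"
      by (rule step[OF R(1) aR]) (use Ann q aR1[of "Suc k"] asuc in auto)
    have qk: "q^(4*k) = exp (- real k)"
    proof -
      have "exp (real (4*k) * (-1/4)) = q^(4*k)" unfolding q_def by (rule exp_of_nat_mult)
      moreover have "real (4*k) * (-1/4) = - real k" by simp
      ultimately show ?thesis by simp
    qed
    have "(A*q^k)^4 = B * exp (- real k)" using A4 qk by (simp add: power_mult_distrib power_mult[symmetric] mult.commute)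
    then have h4: "(A*q^k)^4 = (24 * ((R+1)^(N-1))^2) * (exp (- u R) * exp (- real k))"
      unfolding B_def P0_def by (simp add: mult_ac)
    have Dpos: "0 < 24 * ((R+1)^(N-1))^2" using R r2ge by simp
    have "exp (u (a k)) * (A*q^k)^4 / (24 * ((R+1)^(N-1))^2) = exp (u (a k)) * (exp (- u R) * exp (- real k))"
      unfolding h4 using Dpos by simp
    also have "\<dots> = exp (u (a k) - u R - real k)" by (simp add: exp_add[symmetric])
    finally have "exp (u (a k)) * (A*q^k)^4 / (24 * ((R+1)^(N-1))^2) = exp (u (a k) - u R - real k)" .
    moreover have "1 \<le> exp (u (a k) - u R - real k)" using Suc.IH by simp
    ultimately have "u (a k) + 1 \<le> u (a k + A * q^k)" using st by linarith
    then have "u (a k) + 1 \<le> u (a (Suc k))" unfolding asuc .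
    then show ?case using Suc.IH by simp
  qed
  have "continuous_on {R..R+1} u"
    by (rule continuous_on_subset[OF cont]) (use R r2ge in auto)
  then obtain xm where xm: "xm \<in> {R..R+1}" "\<And>y. y \<in> {R..R+1} \<Longrightarrow> u y \<le> u xm"
    using continuous_attains_sup[of "{R..R+1}" u] by auto
  define k where "k = nat \<lceil>u xm - u R\<rceil> + 1"
  have "u (a k) \<le> u xm" using xm(2)[of "a k"] aR aR1 by auto
  moreover have "u xm - u R < real k" unfolding k_def by linarith
  ultimately show False using ugrow[of k] by linarith
qed


theorem lemma3p3:
  fixes N :: nat and \<alpha> :: real
  assumes "N \<ge> 3" and "\<alpha> > -2"
  shows "\<exists>C > 0. \<forall>\<beta> u. \<beta> \<le> beta0 N \<alpha> \<longrightarrow> entire_sol N \<alpha> \<beta> u \<longrightarrow>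
           (\<forall>r > 0. u r \<le> - (4 + \<alpha>) * ln r + C)"
proof -
  define C0 where "C0 = - ln (1 / ((real N + \<alpha>) * real N * (real N + 2 + \<alpha>)) / (4 + \<alpha>))"
  show ?thesis
  proof (intro exI[of _ "max 1 C0"] conjI allI impI)
    show "0 < max 1 C0" by simp
    fix \<beta> u r
    assume e: "entire_sol N \<alpha> \<beta> u" and r: "0 < (r::real)"
    have S: "{r. 0 \<le> r \<and> ereal r < \<infinity>} = {0..}" by auto
    from e obtain u1 v v1 where
      D0: "\<forall>r. 0 < r \<and> ereal r < \<infinity> \<longrightarrow>
            (u has_real_derivative u1 r) (at r) \<and>
            (u1 has_real_derivative (v r - (real N - 1) / r * u1 r)) (at r) \<and>
            (v has_real_derivative v1 r) (at r) \<and>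
            (v1 has_real_derivative (r powr \<alpha> * exp (u r) - (real N - 1) / r * v1 r)) (at r)"
      and l1: "(u1 \<longlongrightarrow> 0) (at_right 0)"
      and l3: "((\<lambda>r. r ^ (N - 1) * v1 r) \<longlongrightarrow> 0) (at_right 0)"
      and cont: "continuous_on {0..} u" and u0: "u 0 = 0"
      unfolding entire_sol_def radial_sol_on_def S by blast
    have D: "\<And>r. 0 < r \<Longrightarrow>
            (u has_real_derivative u1 r) (at r) \<and>
            (u1 has_real_derivative (v r - (real N - 1) / r * u1 r)) (at r) \<and>
            (v has_real_derivative v1 r) (at r) \<and>
            (v1 has_real_derivative (r powr \<alpha> * exp (u r) - (real N - 1) / r * v1 r)) (at r)"
      using D0 by simp
    have vneg: "\<And>r. 0 < r \<Longrightarrow> v r \<le> 0"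
      by (rule vneg_lemma[OF assms D l3 cont]) auto
    have "u r \<le> - (4 + \<alpha>) * ln r + C0"
      using bound_of_vneg[OF assms D l1 l3 cont u0 vneg r] unfolding C0_def by simp
    then show "u r \<le> - (4 + \<alpha>) * ln r + max 1 C0" by linarith
  qed
qed

end
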